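(* For every integer $k\ge 3$ there exist an integer $i$ with $1\le i<k$, a real $t\in[0,1]$ with $i(1-t)=k/2$, and a function $m(v)=\Theta(v^t)$ such that the $k$-uniform hypergraph properties $f_v$ defined by "$f_v(H)=1$ iff there is $S\subseteq[v]$, $|S|=m(v)$, such that every $k$-subset of $S$ is an edge of $H$ and every edge $E$ of $H$ with $E\not\subseteq S$ satisfies $|E\cap S|<i$" satisfy $s(f_v)=\Theta(v^{k/2})$. In particular, for every $k\ge 2$ there is a $k$-uniform hypergraph property with $s(f)=\Theta(v^{k/2})=\Theta(\sqrt{n})$, $n=\binom vk$.
   Context: A $k$-uniform hypergraph on $[v]$ is identified with a string in $\{0,1\}^{\binom vk}$. A $k$-uniform hypergraph property is a Boolean function on such strings invariant under all permutations of $[v]$. $s(f,x)$ is the number of coordinates whose flip changes $f(x)$, and $s(f)=\max_x s(f,x)$. Asymptotics are as $v\to\infty$ with $k$ fixed. *)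

theory Defs
  imports Complex_Main "HOL-Library.Landau_Symbols"
begin

text \<open>Vertex set [v] is rendered as {0..<v}. A k-uniform hypergraph on [v] is a set of
  k-subsets of {0..<v}, i.e. a subset of ksets v k (equivalently a 0/1 string indexed by ksets v k).\<close>

definition ksets :: "nat \<Rightarrow> nat \<Rightarrow> nat set set" where
  "ksets v k = {E. E \<subseteq> {0..<v} \<and> card E = k}"

definition hypergraph_property :: "nat \<Rightarrow> nat \<Rightarrow> (nat set set \<Rightarrow> bool) \<Rightarrow> bool" where
  "hypergraph_property v k f \<longleftrightarrow>
     (\<forall>\<pi>. bij_betw \<pi> {0..<v} {0..<v} \<longrightarrow>
        (\<forall>H. H \<subseteq> ksets v k \<longrightarrow> f ((\<lambda>E. \<pi> ` E) ` H) = f H))"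

definition flip :: "nat set set \<Rightarrow> nat set \<Rightarrow> nat set set" where
  "flip H E = (if E \<in> H then H - {E} else insert E H)"

definition sens_at :: "nat \<Rightarrow> nat \<Rightarrow> (nat set set \<Rightarrow> bool) \<Rightarrow> nat set set \<Rightarrow> nat" where
  "sens_at v k f H = card {E \<in> ksets v k. f (flip H E) \<noteq> f H}"

definition sens :: "nat \<Rightarrow> nat \<Rightarrow> (nat set set \<Rightarrow> bool) \<Rightarrow> nat" where
  "sens v k f = Max (sens_at v k f ` Pow (ksets v k))"

definition clique_prop :: "nat \<Rightarrow> nat \<Rightarrow> nat \<Rightarrow> nat \<Rightarrow> nat set set \<Rightarrow> bool" where
  "clique_prop k i m v H \<longleftrightarrow>
     (\<exists>S. S \<subseteq> {0..<v} \<and> card S = m \<and>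
          (\<forall>E \<in> ksets v k. E \<subseteq> S \<longrightarrow> E \<in> H) \<and>
          (\<forall>E \<in> H. \<not> E \<subseteq> S \<longrightarrow> card (E \<inter> S) < i))"

end

theory Submission
  imports Defs
begin

lemma cp_perm:
  assumes bij: "bij_betw \<pi> {0..<v} {0..<v}" and HK: "H \<subseteq> ksets v k"
    and cp: "clique_prop k i m v H"
  shows "clique_prop k i m v ((\<lambda>E. \<pi> ` E) ` H)"
proof -
  obtain S where S: "S \<subseteq> {0..<v}" "card S = m" "\<forall>E \<in> ksets v k. E \<subseteq> S \<longrightarrow> E \<in> H"
      "\<forall>E \<in> H. \<not> E \<subseteq> S \<longrightarrow> card (E \<inter> S) < i"
    using cp unfolding clique_prop_def by blast
  have inj: "inj_on \<pi> {0..<v}" and im: "\<pi> ` {0..<v} = {0..<v}" using bij by (auto simp: bij_betw_def)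
  have "\<pi> ` S \<subseteq> {0..<v}" using S(1) im by blast
  moreover have "card (\<pi> ` S) = m" using S(1,2) inj by (metis card_image inj_on_subset)
  moreover have "\<forall>E \<in> ksets v k. E \<subseteq> \<pi> ` S \<longrightarrow> E \<in> (\<lambda>E. \<pi> ` E) ` H"
  proof (intro ballI impI)
    fix E assume E: "E \<in> ksets v k" "E \<subseteq> \<pi> ` S"
    define E0 where "E0 = inv_into {0..<v} \<pi> ` E"
    have sub: "E \<subseteq> \<pi> ` {0..<v}" using E(2) S(1) by blast
    have "E0 \<subseteq> S" unfolding E0_def using E(2) S(1) inj
      by (auto simp: inv_into_f_f subset_iff)
    moreover have "card E0 = card E" unfolding E0_def
      by (rule card_image) (rule inj_on_inv_into[OF sub])
    ultimately have "E0 \<in> ksets v k" using E(1) S(1) unfolding ksets_def by auto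
    hence "E0 \<in> H" using S(3) \<open>E0 \<subseteq> S\<close> by blast
    moreover have "\<pi> ` E0 = E" unfolding E0_def using sub
      by (intro image_inv_into_cancel[OF im]) (use im in auto)
    ultimately show "E \<in> (\<lambda>E. \<pi> ` E) ` H" by blast
  qed
  moreover have "\<forall>G \<in> (\<lambda>E. \<pi> ` E) ` H. \<not> G \<subseteq> \<pi> ` S \<longrightarrow> card (G \<inter> \<pi> ` S) < i"
  proof (intro ballI impI)
    fix G assume G: "G \<in> (\<lambda>E. \<pi> ` E) ` H" "\<not> G \<subseteq> \<pi> ` S"
    then obtain E where E: "E \<in> H" "G = \<pi> ` E" by blast
    have Ev: "E \<subseteq> {0..<v}" using E(1) HK unfolding ksets_def by blast
    have "\<not> E \<subseteq> S" using G(2) E(2) by blast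
    hence "card (E \<inter> S) < i" using S(4) E(1) by blast
    moreover have "G \<inter> \<pi> ` S = \<pi> ` (E \<inter> S)" using E(2) inj Ev S(1)
      by (simp add: inj_on_image_Int)
    moreover have "card (\<pi> ` (E \<inter> S)) = card (E \<inter> S)"
      using inj Ev by (metis card_image inj_on_subset le_infI1)
    ultimately show "card (G \<inter> \<pi> ` S) < i" by simp
  qed
  ultimately show ?thesis unfolding clique_prop_def by blast
qed

lemma cp_hp: "hypergraph_property v k (clique_prop k i m v)"
  unfolding hypergraph_property_def
proof (intro allI impI)
  fix \<pi> H assume bij: "bij_betw \<pi> {0..<v} {0..<v}" and HK: "H \<subseteq> ksets v k"
  have inj: "inj_on \<pi> {0..<v}" and im: "\<pi> ` {0..<v} = {0..<v}" using bij by (auto simp: bij_betw_def)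
  define pinv where "pinv = inv_into {0..<v} \<pi>"
  have bij': "bij_betw pinv {0..<v} {0..<v}" unfolding pinv_def using bij_betw_inv_into[OF bij] .
  have HK': "(\<lambda>E. \<pi> ` E) ` H \<subseteq> ksets v k"
  proof
    fix G assume "G \<in> (\<lambda>E. \<pi> ` E) ` H"
    then obtain E where E: "E \<in> H" "G = \<pi> ` E" by blast
    have "E \<subseteq> {0..<v}" "card E = k" using E(1) HK unfolding ksets_def by auto
    moreover have "card (\<pi> ` E) = card E" using inj \<open>E \<subseteq> {0..<v}\<close> by (metis card_image inj_on_subset)
    ultimately show "G \<in> ksets v k" using E(2) im unfolding ksets_def by auto
  qed
  have bk: "(\<lambda>E. pinv ` E) ` ((\<lambda>E. \<pi> ` E) ` H) = H"
  proof -
    have "\<And>E. E \<in> H \<Longrightarrow> pinv ` \<pi> ` E = E"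
      unfolding pinv_def using HK inj unfolding ksets_def
      by (intro inv_into_image_cancel) auto
    thus ?thesis by (simp add: image_image)
  qed
  show "clique_prop k i m v ((\<lambda>E. \<pi> ` E) ` H) = clique_prop k i m v H"
    using cp_perm[OF bij HK] cp_perm[OF bij' HK'] bk by auto
qed

lemma finite_ksets: "finite (ksets v k)"
  unfolding ksets_def by (rule finite_subset[of _ "Pow {0..<v}"]) auto

lemma sens_ge: "H \<subseteq> ksets v k \<Longrightarrow> sens_at v k f H \<le> sens v k f"
  unfolding sens_def by (rule Max_ge) (auto simp: finite_ksets)

lemma sens_le: "(\<And>H. H \<subseteq> ksets v k \<Longrightarrow> sens_at v k f H \<le> B) \<Longrightarrow> sens v k f \<le> B"
  unfolding sens_def by (subst Max_le_iff) (auto simp: finite_ksets)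

lemma lb_sens:
  assumes km: "k + 1 \<le> m" and mv: "m \<le> v" and i1: "1 \<le> i" and ik: "i < k"
  shows "(m choose i) * ((v - m) choose (k - i)) \<le> sens v k (clique_prop k i m v)"
proof -
  define S0 where "S0 = {0..<m}"
  define H0 where "H0 = ksets m k"
  define f where "f = clique_prop k i m v"
  have S0v: "S0 \<subseteq> {0..<v}" using mv unfolding S0_def by auto
  have cS0: "card S0 = m" "finite S0" unfolding S0_def by auto
  have H0K: "H0 \<subseteq> ksets v k" unfolding H0_def ksets_def using mv by auto
  have H0S: "\<And>G. G \<in> H0 \<longleftrightarrow> G \<in> ksets v k \<and> G \<subseteq> S0"
    unfolding H0_def ksets_def S0_def using mv by auto
  have fH0: "f H0" unfolding f_def clique_prop_def
    by (rule exI[of _ S0]) (use S0v cS0 H0S in auto)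
  define X where "X = {E \<in> ksets v k. card (E \<inter> S0) = i}"
  have Xsens: "X \<subseteq> {E \<in> ksets v k. f (flip H0 E) \<noteq> f H0}"
  proof
    fix E assume EX: "E \<in> X"
    hence EK: "E \<in> ksets v k" and Ei: "card (E \<inter> S0) = i" unfolding X_def by auto
    have cE: "card E = k" "finite E" using EK unfolding ksets_def by (auto intro: finite_subset)
    have nES: "\<not> E \<subseteq> S0"
    proof
      assume "E \<subseteq> S0" hence "E \<inter> S0 = E" by blast
      thus False using Ei cE ik by simp
    qed
    hence "E \<notin> H0" using H0S by blast
    hence fl: "flip H0 E = insert E H0" unfolding flip_def by simp
    have "\<not> f (insert E H0)"
    proof
      assume "f (insert E H0)"
      then obtain S where S: "S \<subseteq> {0..<v}" "card S = m" "\<forall>G \<in> ksets v k. G \<subseteq> S \<longrightarrow> G \<in> insert E H0"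
          "\<forall>G \<in> insert E H0. \<not> G \<subseteq> S \<longrightarrow> card (G \<inter> S) < i"
        unfolding f_def clique_prop_def by blast
      have finS: "finite S" using S(1) by (rule finite_subset) simp
      have SS0: "S \<subseteq> S0"
      proof
        fix x assume xS: "x \<in> S"
        have "\<not> S \<subseteq> E" using cE S(2) km finS by (metis card_mono le_antisym not_less_eq_eq le_trans Suc_eq_plus1)
        then obtain y where y: "y \<in> S" "y \<notin> E" by blast
        have c2: "card {x, y} \<le> 2" by (simp add: card_insert_if)
        have "card (S - {x,y}) = m - card {x,y}" using xS y(1) S(2) finS by (simp add: card_Diff_subset)
        hence "k - card {x,y} \<le> card (S - {x,y})" using km by simp
        then obtain T where T: "T \<subseteq> S - {x,y}" "card T = k - card {x,y}" "finite T"
          by (rule obtain_subset_with_card_n)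
        define G where "G = {x,y} \<union> T"
        have "card G = card {x,y} + card T" unfolding G_def using T by (subst card_Un_disjoint) auto
        hence cG: "card G = k" using T(2) c2 ik i1 by simp
        have GS: "G \<subseteq> S" unfolding G_def using T xS y by auto
        hence "G \<in> ksets v k" using cG S(1) unfolding ksets_def by auto
        hence "G \<in> insert E H0" using S(3) GS by blast
        moreover have "G \<noteq> E" using y unfolding G_def by auto
        ultimately have "G \<subseteq> S0" using H0S by blast
        thus "x \<in> S0" unfolding G_def by auto
      qed
      hence "S = S0" using cS0 S(2) by (metis card_subset_eq)
      thus False using S(4) nES Ei by auto
    qed
    thus "E \<in> {E \<in> ksets v k. f (flip H0 E) \<noteq> f H0}" using EK fl fH0 by auto
  qed
  define As where "As = {A. A \<subseteq> S0 \<and> card A = i}"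
  define Bs where "Bs = {B. B \<subseteq> {0..<v} - S0 \<and> card B = k - i}"
  have cAs: "card As = m choose i" unfolding As_def using n_subsets[OF cS0(2)] cS0 by simp
  have cBs: "card Bs = (v - m) choose (k - i)" unfolding Bs_def
    using n_subsets[of "{0..<v} - S0" "k - i"] S0v cS0 by (simp add: card_Diff_subset)
  have inj: "inj_on (\<lambda>(A,B). A \<union> B) (As \<times> Bs)"
  proof (rule inj_onI)
    fix p q assume p: "p \<in> As \<times> Bs" and q: "q \<in> As \<times> Bs"
      and eq0: "(\<lambda>(A,B). A \<union> B) p = (\<lambda>(A,B). A \<union> B) q"
    obtain A B A' B' where pq: "p = (A, B)" "q = (A', B')" by (cases p, cases q) auto
    have eq: "A \<union> B = A' \<union> B'" using eq0 pq by simp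
    have "A \<subseteq> S0" "A' \<subseteq> S0" "B \<inter> S0 = {}" "B' \<inter> S0 = {}" using p q pq unfolding As_def Bs_def by auto
    hence "A = (A \<union> B) \<inter> S0" "A' = (A' \<union> B') \<inter> S0" "B = (A \<union> B) - S0" "B' = (A' \<union> B') - S0" by auto
    thus "p = q" using eq pq by metis
  qed
  have imX: "(\<lambda>(A,B). A \<union> B) ` (As \<times> Bs) \<subseteq> X"
  proof clarify
    fix A B assume AB: "A \<in> As" "B \<in> Bs"
    hence A: "A \<subseteq> S0" "card A = i" and B: "B \<subseteq> {0..<v} - S0" "card B = k - i" unfolding As_def Bs_def by auto
    have fin: "finite A" "finite B" using A(1) B(1) cS0 by (auto intro: finite_subset)
    have "card (A \<union> B) = k" using A B fin ik by (subst card_Un_disjoint) auto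
    moreover have "(A \<union> B) \<inter> S0 = A" using A B by auto
    ultimately show "A \<union> B \<in> X" unfolding X_def ksets_def using A B S0v by auto
  qed
  have finX: "finite X" unfolding X_def using finite_ksets by simp
  have "(m choose i) * ((v - m) choose (k - i)) = card ((\<lambda>(A,B). A \<union> B) ` (As \<times> Bs))"
    using card_image[OF inj] cAs cBs by (simp add: card_cartesian_product)
  also have "\<dots> \<le> card X" using imX finX by (rule card_mono[rotated])
  also have "\<dots> \<le> sens_at v k f H0" unfolding sens_at_def using Xsens
    by (intro card_mono) (auto simp: finite_ksets)
  also have "\<dots> \<le> sens v k f" using H0K by (rule sens_ge)
  finally show ?thesis unfolding f_def .
qed

lemma ub_true:
  assumes HK: "H \<subseteq> ksets v k" and cp: "clique_prop k i m v H" and ik: "i < k"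
  shows "sens_at v k (clique_prop k i m v) H \<le> (m choose i) * (v choose (k - i))"
proof -
  define f where "f = clique_prop k i m v"
  obtain S where S: "S \<subseteq> {0..<v}" "card S = m" "\<forall>E \<in> ksets v k. E \<subseteq> S \<longrightarrow> E \<in> H"
      "\<forall>E \<in> H. \<not> E \<subseteq> S \<longrightarrow> card (E \<inter> S) < i"
    using cp unfolding clique_prop_def by blast
  have finS: "finite S" using S(1) by (rule finite_subset) simp
  define Y where "Y = {E \<in> ksets v k. i \<le> card (E \<inter> S)}"
  have sub: "{E \<in> ksets v k. f (flip H E) \<noteq> f H} \<subseteq> Y"
  proof
    fix E assume "E \<in> {E \<in> ksets v k. f (flip H E) \<noteq> f H}"
    hence EK: "E \<in> ksets v k" and ch: "f (flip H E) \<noteq> f H" by auto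
    show "E \<in> Y"
    proof (rule ccontr)
      assume "E \<notin> Y"
      hence lt: "card (E \<inter> S) < i" using EK unfolding Y_def by auto
      have nES: "\<not> E \<subseteq> S"
      proof
        assume "E \<subseteq> S" hence "E \<inter> S = E" by blast
        thus False using lt EK ik unfolding ksets_def by auto
      qed
      have "f (flip H E)" unfolding f_def clique_prop_def
      proof (rule exI[of _ S], intro conjI)
        show "\<forall>G \<in> ksets v k. G \<subseteq> S \<longrightarrow> G \<in> flip H E"
          using S(3) nES unfolding flip_def by auto
        show "\<forall>G \<in> flip H E. \<not> G \<subseteq> S \<longrightarrow> card (G \<inter> S) < i"
          using S(4) lt unfolding flip_def by (cases "E \<in> H") auto
      qed (use S in auto)
      moreover have "f H" using cp unfolding f_def .
      ultimately show False using ch by simp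
    qed
  qed
  define As where "As = {A. A \<subseteq> S \<and> card A = i}"
  define Bs where "Bs = {B. B \<subseteq> {0..<v} \<and> card B = k - i}"
  have finAB: "finite (As \<times> Bs)" unfolding As_def Bs_def using finS
    by (intro finite_cartesian_product) (auto intro: finite_subset[of _ "Pow S"] finite_subset[of _ "Pow {0..<v}"])
  have "Y \<subseteq> (\<lambda>(A,B). A \<union> B) ` (As \<times> Bs)"
  proof
    fix E assume "E \<in> Y"
    hence EK: "E \<in> ksets v k" and Ei: "i \<le> card (E \<inter> S)" unfolding Y_def by auto
    have finE: "finite E" "card E = k" "E \<subseteq> {0..<v}" using EK unfolding ksets_def by (auto intro: finite_subset)
    obtain A where A: "A \<subseteq> E \<inter> S" "card A = i" "finite A" using obtain_subset_with_card_n[OF Ei] by blast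
    have "card (E - A) = k - i" using A finE by (simp add: card_Diff_subset)
    hence "A \<in> As" "E - A \<in> Bs" using A finE unfolding As_def Bs_def by auto
    moreover have "E = A \<union> (E - A)" using A by auto
    ultimately show "E \<in> (\<lambda>(A,B). A \<union> B) ` (As \<times> Bs)"
      by (intro rev_image_eqI[of "(A, E - A)"]) auto
  qed
  hence "card Y \<le> card ((\<lambda>(A,B). A \<union> B) ` (As \<times> Bs))" using finAB by (intro card_mono) auto
  also have "\<dots> \<le> card (As \<times> Bs)" using finAB by (rule card_image_le)
  also have "\<dots> = (m choose i) * (v choose (k - i))" unfolding As_def Bs_def
    using n_subsets[OF finS] n_subsets[of "{0..<v}"] S(2) by (simp add: card_cartesian_product)
  finally have "card Y \<le> (m choose i) * (v choose (k - i))" .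
  moreover have "sens_at v k f H \<le> card Y" unfolding sens_at_def
    using sub by (intro card_mono) (auto simp: Y_def finite_ksets)
  ultimately show ?thesis unfolding f_def by simp
qed

lemma three_G:
  assumes finS: "finite S" and finS': "finite S'" and cS: "card S = m" and cS': "card S' = m"
    and ne: "S \<noteq> S'" and iC: "i \<le> card (S \<inter> S')" and ik: "i < k" and i1: "1 \<le> i" and km: "k + 3 \<le> m"
  shows "\<exists>G. G \<subseteq> S' \<and> card G = k \<and> \<not> G \<subseteq> S \<and> i \<le> card (G \<inter> S) \<and> G \<noteq> E \<and> G \<noteq> F"
proof -
  define \<G> where "\<G> = {G. G \<subseteq> S' \<and> card G = k \<and> \<not> G \<subseteq> S \<and> i \<le> card (G \<inter> S)}"
  have finG: "finite \<G>" unfolding \<G>_def by (rule finite_subset[of _ "Pow S'"]) (use finS' in auto)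
  define D where "D = S' - S"
  define C where "C = S \<inter> S'"
  have finCD: "finite C" "finite D" unfolding C_def D_def using finS finS' by auto
  have cCD: "card C + card D = m" unfolding C_def D_def using cS' finS'
    using card_Int_Diff[OF finS', of S] by (simp add: Int_commute)
  have Dne: "D \<noteq> {}"
  proof
    assume "D = {}" hence "S' \<subseteq> S" unfolding D_def by auto
    hence "S' = S" using card_subset_eq[OF finS] cS cS' by metis
    thus False using ne by simp
  qed
  have "\<exists>P A. 3 \<le> card A \<and> finite A \<and> (\<forall>a\<in>A. a \<notin> P \<and> insert a P \<in> \<G>)"
  proof (cases "3 \<le> card D")
    case True
    obtain A where A: "A \<subseteq> D" "card A = 3" "finite A" using obtain_subset_with_card_n[OF True] by blast
    obtain I where I: "I \<subseteq> C" "card I = i" "finite I" using obtain_subset_with_card_n[of i C] iC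
      unfolding C_def by blast
    have AI: "A \<inter> I = {}" "A \<union> I \<subseteq> S'" using A(1) I(1) unfolding C_def D_def by auto
    have "card (S' - (A \<union> I)) = m - (3 + i)" using AI A I finS' cS'
      by (simp add: card_Diff_subset card_Un_disjoint)
    hence "k - 1 - i \<le> card (S' - (A \<union> I))" using km by simp
    then obtain R where R: "R \<subseteq> S' - (A \<union> I)" "card R = k - 1 - i" "finite R"
      using obtain_subset_with_card_n by blast
    define P where "P = I \<union> R"
    have cP: "card P = k - 1" unfolding P_def using R I ik by (subst card_Un_disjoint) auto
    have "\<forall>a\<in>A. a \<notin> P \<and> insert a P \<in> \<G>"
    proof
      fix a assume aA: "a \<in> A"
      have aP: "a \<notin> P" unfolding P_def using aA AI R(1) by auto
      have "card (insert a P) = k" using aP cP R I ik unfolding P_def by auto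
      moreover have "insert a P \<subseteq> S'" unfolding P_def using aA A(1) I(1) R(1) unfolding D_def C_def by auto
      moreover have "\<not> insert a P \<subseteq> S" using aA A(1) unfolding D_def by auto
      moreover have "i \<le> card (insert a P \<inter> S)"
      proof -
        have "I \<subseteq> insert a P \<inter> S" using I(1) unfolding P_def C_def by auto
        thus ?thesis using I(2) finS by (metis card_mono finite_Int)
      qed
      ultimately show "a \<notin> P \<and> insert a P \<in> \<G>" using aP unfolding \<G>_def by auto
    qed
    thus ?thesis using A by (intro exI[of _ P] exI[of _ A]) simp
  next
    case False
    hence cC: "k + 1 \<le> card C" using cCD km by linarith
    obtain d where d: "d \<in> D" using Dne by blast
    have "k - 2 \<le> card C" using cC by simp
    then obtain B where B: "B \<subseteq> C" "card B = k - 2" "finite B" by (rule obtain_subset_with_card_n)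
    define A where "A = C - B"
    have cA: "3 \<le> card A" unfolding A_def using B finCD cC ik i1 by (simp add: card_Diff_subset)
    define P where "P = insert d B"
    have dB: "d \<notin> B" using d B(1) unfolding C_def D_def by auto
    have cP: "card P = k - 1" unfolding P_def using dB B ik i1 by simp
    have "\<forall>a\<in>A. a \<notin> P \<and> insert a P \<in> \<G>"
    proof
      fix a assume aA: "a \<in> A"
      have aP: "a \<notin> P" unfolding P_def using aA d unfolding A_def C_def D_def by auto
      have "card (insert a P) = k" using aP cP B ik unfolding P_def by auto
      moreover have "insert a P \<subseteq> S'" unfolding P_def using aA d B(1) unfolding A_def D_def C_def by auto
      moreover have "\<not> insert a P \<subseteq> S" using d unfolding P_def D_def by auto
      moreover have "i \<le> card (insert a P \<inter> S)"
      proof -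
        have sub: "insert a B \<subseteq> insert a P \<inter> S" using aA B(1) unfolding P_def A_def C_def by auto
        have "a \<notin> B" using aA unfolding A_def by auto
        hence "card (insert a B) = k - 1" using B ik i1 by simp
        moreover have "card (insert a B) \<le> card (insert a P \<inter> S)" using sub finS by (metis card_mono finite_Int)
        ultimately show ?thesis using ik by simp
      qed
      ultimately show "a \<notin> P \<and> insert a P \<in> \<G>" using aP unfolding \<G>_def by auto
    qed
    moreover have "finite A" unfolding A_def using finCD by simp
    ultimately show ?thesis using cA by (intro exI[of _ P] exI[of _ A]) simp
  qed
  then obtain P A where PA: "3 \<le> card A" "finite A" "\<forall>a\<in>A. a \<notin> P \<and> insert a P \<in> \<G>" by blast
  have inj: "inj_on (\<lambda>a. insert a P) A"
  proof (rule inj_onI)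
    fix a b assume "a \<in> A" "b \<in> A" "insert a P = insert b P"
    thus "a = b" using PA(3) by (metis insertE insertI1)
  qed
  have "3 \<le> card ((\<lambda>a. insert a P) ` A)" using card_image[OF inj] PA(1) by simp
  also have "\<dots> \<le> card \<G>" using PA(3) finG by (intro card_mono) auto
  finally have "3 \<le> card \<G>" .
  hence "card \<G> - card {E, F} \<le> card (\<G> - {E, F})" by (intro diff_card_le_card_Diff) auto
  moreover have "card {E, F} \<le> 2" by (simp add: card_insert_if)
  ultimately have "\<G> - {E, F} \<noteq> {}" using \<open>3 \<le> card \<G>\<close> by fastforce
  thus ?thesis unfolding \<G>_def by blast
qed

definition wit :: "nat \<Rightarrow> nat \<Rightarrow> nat \<Rightarrow> nat \<Rightarrow> nat set set \<Rightarrow> nat set \<Rightarrow> bool" where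
  "wit k i m v H S \<longleftrightarrow> S \<subseteq> {0..<v} \<and> card S = m \<and>
          (\<forall>E \<in> ksets v k. E \<subseteq> S \<longrightarrow> E \<in> H) \<and>
          (\<forall>E \<in> H. \<not> E \<subseteq> S \<longrightarrow> card (E \<inter> S) < i)"

lemma cp_wit: "clique_prop k i m v H \<longleftrightarrow> (\<exists>S. wit k i m v H S)"
  unfolding clique_prop_def wit_def by blast

lemma wit_props:
  assumes w: "wit k i m v (flip H E) S" and nf: "\<not> (\<exists>S. wit k i m v H S)"
    and EK: "E \<in> ksets v k"
  shows "\<forall>G\<in>ksets v k. G \<subseteq> S \<longrightarrow> G \<noteq> E \<longrightarrow> G \<in> H"
    and "\<forall>G\<in>H. G \<noteq> E \<longrightarrow> \<not> G \<subseteq> S \<longrightarrow> card (G \<inter> S) < i"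
    and "(E \<notin> H \<and> E \<subseteq> S) \<or> (E \<in> H \<and> \<not> E \<subseteq> S \<and> i \<le> card (E \<inter> S))"
proof -
  have w1: "S \<subseteq> {0..<v}" "card S = m" and w3: "\<forall>G \<in> ksets v k. G \<subseteq> S \<longrightarrow> G \<in> flip H E"
    and w4: "\<forall>G \<in> flip H E. \<not> G \<subseteq> S \<longrightarrow> card (G \<inter> S) < i" using w unfolding wit_def by auto
  show "\<forall>G\<in>ksets v k. G \<subseteq> S \<longrightarrow> G \<noteq> E \<longrightarrow> G \<in> H"
    using w3 unfolding flip_def by (cases "E \<in> H") auto
  show "\<forall>G\<in>H. G \<noteq> E \<longrightarrow> \<not> G \<subseteq> S \<longrightarrow> card (G \<inter> S) < i"
    using w4 unfolding flip_def by (cases "E \<in> H") auto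
  show "(E \<notin> H \<and> E \<subseteq> S) \<or> (E \<in> H \<and> \<not> E \<subseteq> S \<and> i \<le> card (E \<inter> S))"
  proof (cases "E \<in> H")
    case False
    hence fl: "flip H E = insert E H" unfolding flip_def by simp
    have "E \<subseteq> S"
    proof (rule ccontr)
      assume nE: "\<not> E \<subseteq> S"
      have "wit k i m v H S" unfolding wit_def
        using w1 w3 w4 nE unfolding fl by auto
      thus False using nf by blast
    qed
    thus ?thesis using False by simp
  next
    case True
    hence fl: "flip H E = H - {E}" unfolding flip_def by simp
    have nE: "\<not> E \<subseteq> S"
    proof
      assume "E \<subseteq> S"
      thus False using w3 EK unfolding fl by blast
    qed
    have "i \<le> card (E \<inter> S)"
    proof (rule ccontr)
      assume lt: "\<not> i \<le> card (E \<inter> S)"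
      have a3: "\<forall>G\<in>ksets v k. G \<subseteq> S \<longrightarrow> G \<in> H" using w3 unfolding fl by blast
      have a4: "\<forall>G\<in>H. \<not> G \<subseteq> S \<longrightarrow> card (G \<inter> S) < i"
      proof (intro ballI impI)
        fix G assume "G \<in> H" "\<not> G \<subseteq> S"
        thus "card (G \<inter> S) < i" using lt w4 unfolding fl by (cases "G = E") auto
      qed
      have "wit k i m v H S" unfolding wit_def using w1 a3 a4 by blast
      thus False using nf by blast
    qed
    thus ?thesis using True nE by simp
  qed
qed

lemma ub_false:
  assumes HK: "H \<subseteq> ksets v k" and nf: "\<not> clique_prop k i m v H" and ik: "i < k" and i1: "1 \<le> i"
    and km: "k + 3 \<le> m"
  shows "sens_at v k (clique_prop k i m v) H * (m choose i) \<le> v choose i"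
proof -
  have nfw: "\<not> (\<exists>S. wit k i m v H S)" using nf cp_wit by blast
  define Z where "Z = {E \<in> ksets v k. clique_prop k i m v (flip H E) \<noteq> clique_prop k i m v H}"
  have finZ: "finite Z" unfolding Z_def using finite_ksets by simp
  have Zw: "\<And>E. E \<in> Z \<Longrightarrow> \<exists>S. wit k i m v (flip H E) S" using nf unfolding Z_def cp_wit by auto
  define W where "W E = (SOME S. wit k i m v (flip H E) S)" for E
  have W: "\<And>E. E \<in> Z \<Longrightarrow> wit k i m v (flip H E) (W E)" unfolding W_def using Zw by (rule someI_ex)
  have ZK: "\<And>E. E \<in> Z \<Longrightarrow> E \<in> ksets v k" unfolding Z_def by auto
  note P = wit_props[OF W nfw ZK]
  have Wv: "\<And>E. E \<in> Z \<Longrightarrow> W E \<subseteq> {0..<v} \<and> card (W E) = m \<and> finite (W E)"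
    using W unfolding wit_def by (meson finite_atLeastLessThan finite_subset)
  have injW: "\<And>E F. E \<in> Z \<Longrightarrow> F \<in> Z \<Longrightarrow> W E = W F \<Longrightarrow> E = F"
  proof (rule ccontr)
    fix E F assume EZ: "E \<in> Z" and FZ: "F \<in> Z" and eq: "W E = W F" and ne: "E \<noteq> F"
    from P(3)[OF EZ EZ] show False
    proof
      assume "E \<notin> H \<and> E \<subseteq> W E"
      thus False using P(1)[OF FZ FZ] ZK[OF EZ] eq ne by auto
    next
      assume "E \<in> H \<and> \<not> E \<subseteq> W E \<and> i \<le> card (E \<inter> W E)"
      thus False using P(2)[OF FZ FZ] eq ne by fastforce
    qed
  qed
  have small: "\<And>E F. E \<in> Z \<Longrightarrow> F \<in> Z \<Longrightarrow> E \<noteq> F \<Longrightarrow> card (W E \<inter> W F) < i"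
  proof (rule ccontr)
    fix E F assume EZ: "E \<in> Z" and FZ: "F \<in> Z" and ne: "E \<noteq> F" and ge: "\<not> card (W E \<inter> W F) < i"
    have neW: "W E \<noteq> W F" using injW EZ FZ ne by blast
    obtain G where G: "G \<subseteq> W F" "card G = k" "\<not> G \<subseteq> W E" "i \<le> card (G \<inter> W E)" "G \<noteq> E" "G \<noteq> F"
      using three_G[of "W E" "W F" m i k E F] Wv[OF EZ] Wv[OF FZ] neW ge ik i1 km by auto
    have GK: "G \<in> ksets v k" using G(1,2) Wv[OF FZ] unfolding ksets_def by auto
    have "G \<in> H" using P(1)[OF FZ FZ] GK G by blast
    hence "card (G \<inter> W E) < i" using P(2)[OF EZ EZ] G by blast
    thus False using G(4) by simp
  qed
  define Q where "Q E = {A. A \<subseteq> W E \<and> card A = i}" for E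
  have finQ: "\<forall>E\<in>Z. finite (Q E)" unfolding Q_def using Wv
    by (auto intro: finite_subset[of _ "Pow (W _)"])
  have cQ: "\<And>E. E \<in> Z \<Longrightarrow> card (Q E) = m choose i" unfolding Q_def using Wv n_subsets by metis
  have disj: "\<forall>E\<in>Z. \<forall>F\<in>Z. E \<noteq> F \<longrightarrow> Q E \<inter> Q F = {}"
  proof (intro ballI impI)
    fix E F assume EZ: "E \<in> Z" and FZ: "F \<in> Z" and ne: "E \<noteq> F"
    show "Q E \<inter> Q F = {}"
    proof (rule ccontr)
      assume "Q E \<inter> Q F \<noteq> {}"
      then obtain A where "A \<subseteq> W E \<inter> W F" "card A = i" unfolding Q_def by auto
      hence "i \<le> card (W E \<inter> W F)" using Wv[OF EZ] by (metis card_mono finite_Int)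
      thus False using small[OF EZ FZ ne] by simp
    qed
  qed
  have "card (\<Union>(Q ` Z)) = (\<Sum>E\<in>Z. card (Q E))" using card_UN_disjoint[OF finZ finQ disj] .
  also have "\<dots> = card Z * (m choose i)" using cQ by simp
  finally have eq: "card (\<Union>(Q ` Z)) = card Z * (m choose i)" .
  have "\<Union>(Q ` Z) \<subseteq> {A. A \<subseteq> {0..<v} \<and> card A = i}" unfolding Q_def using Wv by blast
  hence "card (\<Union>(Q ` Z)) \<le> card {A. A \<subseteq> {0..<v} \<and> card A = i}"
    by (rule card_mono[rotated]) (rule finite_subset[of _ "Pow {0..<v}"], auto)
  also have "\<dots> = v choose i" using n_subsets[of "{0..<v}" i] by simp
  finally show ?thesis using eq unfolding sens_at_def Z_def by simp
qed

lemma sens_attained: "\<exists>H. H \<subseteq> ksets v k \<and> sens v k f = sens_at v k f H"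
proof -
  have "sens v k f \<in> sens_at v k f ` Pow (ksets v k)" unfolding sens_def
    by (rule Max_in) (auto simp: finite_ksets)
  thus ?thesis by auto
qed

lemma pow_id1:
  fixes v t :: real
  assumes v: "0 < v" and it: "real i * (1 - t) = real k / 2" and ik: "i \<le> k"
  shows "(v powr t) ^ i * v ^ (k - i) = v powr (real k / 2)"
proof -
  have "(v powr t) ^ i = v powr (real i * t)" using v by (simp add: powr_power)
  moreover have "v ^ (k - i) = v powr real (k - i)" using v by (simp add: powr_realpow)
  ultimately have "(v powr t) ^ i * v ^ (k - i) = v powr (real i * t + real (k - i))"
    by (simp add: powr_add)
  also have "real i * t + real (k - i) = real k / 2" using it ik by (simp add: of_nat_diff algebra_simps)
  finally show ?thesis .
qed

lemma pow_id2:
  fixes v t :: real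
  assumes v: "0 < v" and it: "real i * (1 - t) = real k / 2"
  shows "v ^ i / (v powr t) ^ i = v powr (real k / 2)"
proof -
  have "(v powr t) ^ i = v powr (real i * t)" using v by (simp add: powr_power)
  moreover have "v ^ i = v powr real i" using v by (simp add: powr_realpow)
  ultimately have "v ^ i / (v powr t) ^ i = v powr (real i - real i * t)"
    by (simp add: powr_diff)
  also have "real i - real i * t = real k / 2" using it by (simp add: algebra_simps)
  finally show ?thesis .
qed

lemma m_bounds:
  fixes t :: real
  assumes v: "1 \<le> v" and t0: "0 \<le> t"
  shows "real v powr t / 2 \<le> real (max (k+3) (nat \<lfloor>real v powr t\<rfloor>))"
    and "real (max (k+3) (nat \<lfloor>real v powr t\<rfloor>)) \<le> (real k + 3) * real v powr t"
proof -
  define p where "p = real v powr t"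
  have p1: "1 \<le> p" unfolding p_def using v t0 by (intro ge_one_powr_ge_zero) auto
  have eq: "real (max (k+3) (nat \<lfloor>p\<rfloor>)) = max (real k + 3) (of_int \<lfloor>p\<rfloor>)"
    using p1 by (simp add: of_nat_max)
  have f1: "p - 1 < of_int \<lfloor>p\<rfloor>" "of_int \<lfloor>p\<rfloor> \<le> p" by linarith+
  show "real v powr t / 2 \<le> real (max (k+3) (nat \<lfloor>real v powr t\<rfloor>))"
  proof -
    have "p / 2 \<le> max (real k + 3) (of_int \<lfloor>p\<rfloor>)"
    proof (cases "p \<le> 2")
      case True thus ?thesis by (simp add: le_max_iff_disj)
    next
      case False hence "p / 2 \<le> of_int \<lfloor>p\<rfloor>" using f1 by linarith
      thus ?thesis by (simp add: le_max_iff_disj)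
    qed
    thus ?thesis using eq unfolding p_def by simp
  qed
  have "real k + 3 \<le> (real k + 3) * p" using p1 by simp
  thus "real (max (k+3) (nat \<lfloor>real v powr t\<rfloor>)) \<le> (real k + 3) * real v powr t"
  proof -
    have "max (real k + 3) (of_int \<lfloor>p\<rfloor>) \<le> (real k + 3) * p"
    proof -
      have "1 * p \<le> (real k + 3) * p" using p1 by (intro mult_right_mono) auto
      hence "of_int \<lfloor>p\<rfloor> \<le> (real k + 3) * p" using f1(2) by linarith
      thus ?thesis using \<open>real k + 3 \<le> (real k + 3) * p\<close> by (rule max.boundedI[rotated])
    qed
    thus ?thesis using eq unfolding p_def by simp
  qed
qed

lemma powr_ge1: "1 \<le> v \<Longrightarrow> 0 \<le> (t::real) \<Longrightarrow> 1 \<le> real v powr t"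
  by (intro ge_one_powr_ge_zero) auto

lemma choose_le_pow: "n choose r \<le> n ^ r"
  by (cases "r \<le> n") (auto simp: binomial_le_pow binomial_eq_0)

lemma sens_upper:
  fixes t :: real
  assumes i1: "1 \<le> i" and ik: "i < k" and it: "real i * (1 - t) = real k / 2" and t0: "0 \<le> t"
    and v: "1 \<le> v"
  shows "real (sens v k (clique_prop k i (max (k+3) (nat \<lfloor>real v powr t\<rfloor>)) v))
           \<le> ((real k + 3) ^ i + (2 * real i) ^ i) * real v powr (real k / 2)"
proof -
  define m where "m = max (k+3) (nat \<lfloor>real v powr t\<rfloor>)"
  define p where "p = real v powr t"
  define V where "V = real v powr (real k / 2)"
  note mb = m_bounds[OF v t0, of k, folded m_def p_def] powr_ge1[OF v t0, folded p_def]
  have V0: "0 \<le> V" unfolding V_def by simp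
  have vpos: "0 < real v" using v by simp
  have id1: "p ^ i * real v ^ (k - i) = V" unfolding p_def V_def using pow_id1[OF vpos it] ik by simp
  have id2: "real v ^ i / p ^ i = V" unfolding p_def V_def using pow_id2[OF vpos it] by simp
  have km: "k + 3 \<le> m" unfolding m_def by simp
  obtain H where H: "H \<subseteq> ksets v k" "sens v k (clique_prop k i m v) = sens_at v k (clique_prop k i m v) H"
    using sens_attained by blast
  define s where "s = sens_at v k (clique_prop k i m v) H"
  have "real s \<le> ((real k + 3) ^ i + (2 * real i) ^ i) * V"
  proof (cases "clique_prop k i m v H")
    case True
    have "s \<le> (m choose i) * (v choose (k - i))" unfolding s_def using ub_true[OF H(1) True ik] .
    also have "\<dots> \<le> m ^ i * v ^ (k - i)" by (intro mult_le_mono choose_le_pow)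
    finally have "real s \<le> real m ^ i * real v ^ (k - i)" by (metis of_nat_le_iff of_nat_mult of_nat_power)
    also have "\<dots> \<le> ((real k + 3) * p) ^ i * real v ^ (k - i)"
      using mb by (intro mult_right_mono power_mono) auto
    also have "\<dots> = (real k + 3) ^ i * V" using id1 by (simp add: power_mult_distrib)
    also have "\<dots> \<le> ((real k + 3) ^ i + (2 * real i) ^ i) * V" using V0 by (intro mult_right_mono) auto
    finally show ?thesis .
  next
    case False
    have "s * (m choose i) \<le> v choose i" unfolding s_def using ub_false[OF H(1) False ik i1 km] .
    also have "\<dots> \<le> v ^ i" by (rule choose_le_pow)
    finally have A: "real s * real (m choose i) \<le> real v ^ i" by (metis of_nat_le_iff of_nat_mult of_nat_power)
    define q where "q = (p / (2 * real i)) ^ i"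
    have qpos: "0 < q" unfolding q_def using mb i1 by simp
    have "q \<le> (real m / real i) ^ i" unfolding q_def using mb i1
      by (intro power_mono) (auto simp: divide_simps)
    also have "\<dots> \<le> real (m choose i)" using km ik by (intro binomial_ge_n_over_k_pow_k) simp
    finally have qC: "q \<le> real (m choose i)" .
    have "real s * q \<le> real v ^ i" using A qC by (meson order_trans mult_left_mono of_nat_0_le_iff)
    hence "real s \<le> real v ^ i / q" using qpos by (simp add: pos_le_divide_eq)
    also have "\<dots> = (2 * real i) ^ i * (real v ^ i / p ^ i)" unfolding q_def using i1
      by (simp add: power_divide)
    also have "\<dots> = (2 * real i) ^ i * V" using id2 by simp
    also have "\<dots> \<le> ((real k + 3) ^ i + (2 * real i) ^ i) * V" using V0 by (intro mult_right_mono) auto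
    finally show ?thesis .
  qed
  thus ?thesis using H(2) unfolding s_def m_def V_def by simp
qed

lemma sens_lower:
  fixes t :: real
  assumes i1: "1 \<le> i" and ik: "i < k" and it: "real i * (1 - t) = real k / 2" and t0: "0 \<le> t"
    and v: "1 \<le> v" and mv: "real (max (k+3) (nat \<lfloor>real v powr t\<rfloor>)) \<le> real v / 2"
    and kv: "real k \<le> real v / 2"
  shows "real v powr (real k / 2) / ((2 * real i) ^ i * (2 * real (k - i)) ^ (k - i))
           \<le> real (sens v k (clique_prop k i (max (k+3) (nat \<lfloor>real v powr t\<rfloor>)) v))"
proof -
  define m where "m = max (k+3) (nat \<lfloor>real v powr t\<rfloor>)"
  define p where "p = real v powr t"
  define V where "V = real v powr (real k / 2)"
  note mb = m_bounds[OF v t0, of k, folded m_def p_def] powr_ge1[OF v t0, folded p_def]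
  have vpos: "0 < real v" using v by simp
  have id1: "p ^ i * real v ^ (k - i) = V" unfolding p_def V_def using pow_id1[OF vpos it] ik by simp
  have mv': "real m \<le> real v / 2" using mv unfolding m_def .
  have km: "k + 1 \<le> m" unfolding m_def by simp
  have mvn: "m \<le> v" using mv' by simp
  have rvm: "real (v - m) = real v - real m" using mvn by (simp add: of_nat_diff)
  have kivm: "k - i \<le> v - m" using rvm mv' kv by linarith
  have "real ((m choose i) * ((v - m) choose (k - i))) \<le> real (sens v k (clique_prop k i m v))"
    using lb_sens[OF km mvn i1 ik] by (simp only: of_nat_le_iff)
  moreover have "(p / (2 * real i)) ^ i \<le> real (m choose i)"
  proof -
    have "(p / (2 * real i)) ^ i \<le> (real m / real i) ^ i" using mb i1
      by (intro power_mono) (auto simp: divide_simps)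
    also have "\<dots> \<le> real (m choose i)" using km ik by (intro binomial_ge_n_over_k_pow_k) simp
    finally show ?thesis .
  qed
  moreover have "(real v / (2 * real (k - i))) ^ (k - i) \<le> real ((v - m) choose (k - i))"
  proof -
    have "(real v / (2 * real (k - i))) ^ (k - i) \<le> (real (v - m) / real (k - i)) ^ (k - i)"
    proof (rule power_mono)
      have x: "0 < real (k - i)" using ik by simp
      have "real v / 2 \<le> real (v - m)" using rvm mv' by linarith
      hence "(real v / 2) / real (k - i) \<le> real (v - m) / real (k - i)" using x by (intro divide_right_mono) auto
      thus "real v / (2 * real (k - i)) \<le> real (v - m) / real (k - i)" by (simp only: divide_divide_eq_left mult.commute)
    qed simp
    also have "\<dots> \<le> real ((v - m) choose (k - i))" using kivm by (intro binomial_ge_n_over_k_pow_k)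
    finally show ?thesis .
  qed
  ultimately have "(p / (2 * real i)) ^ i * (real v / (2 * real (k - i))) ^ (k - i)
      \<le> real (sens v k (clique_prop k i m v))"
    by (smt (verit) mult_mono of_nat_0_le_iff of_nat_mult zero_le_divide_iff zero_le_power mb(3) order_trans)
  moreover have "(p / (2 * real i)) ^ i * (real v / (2 * real (k - i))) ^ (k - i)
      = V / ((2 * real i) ^ i * (2 * real (k - i)) ^ (k - i))"
    using id1[symmetric] by (simp add: power_divide)
  ultimately show ?thesis unfolding V_def m_def by simp
qed

lemma main_k:
  assumes k2: "2 \<le> k"
  shows "\<exists>(i::nat) (t::real) (m::nat \<Rightarrow> nat).
               1 \<le> i \<and> i < k \<and> 0 \<le> t \<and> t \<le> 1 \<and> real i * (1 - t) = real k / 2 \<and>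
               (\<lambda>v. real (m v)) \<in> \<Theta>(\<lambda>v. real v powr t) \<and>
               (\<forall>v. hypergraph_property v k (clique_prop k i (m v) v)) \<and>
               (\<lambda>v. real (sens v k (clique_prop k i (m v) v))) \<in> \<Theta>(\<lambda>v. real v powr (real k / 2))"
proof -
  define i where "i = (k + 1) div 2"
  have i1: "1 \<le> i" and ik: "i < k" and ki: "real k \<le> 2 * real i" unfolding i_def using k2 by auto
  define a where "a = real k / (2 * real i)"
  define t where "t = 1 - a"
  have a0: "0 < a" and a1: "a \<le> 1" unfolding a_def using i1 ki k2 by (auto simp: divide_simps)
  have t0: "0 \<le> t" and t1: "t \<le> 1" unfolding t_def using a0 a1 by auto
  have it: "real i * (1 - t) = real k / 2" unfolding t_def a_def using i1 by (simp add: divide_simps)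
  define m where "m v = max (k+3) (nat \<lfloor>real v powr t\<rfloor>)" for v
  have mT: "(\<lambda>v. real (m v)) \<in> \<Theta>(\<lambda>v. real v powr t)"
  proof (rule bigthetaI)
    show "(\<lambda>v. real (m v)) \<in> O(\<lambda>v. real v powr t)"
    proof (rule landau_o.bigI[of "real k + 3"])
      show "eventually (\<lambda>v. norm (real (m v)) \<le> (real k + 3) * norm (real v powr t)) at_top"
        using eventually_ge_at_top[of "1::nat"]
        by eventually_elim (use m_bounds(2)[OF _ t0] in \<open>auto simp: m_def\<close>)
    qed simp
    show "(\<lambda>v. real (m v)) \<in> \<Omega>(\<lambda>v. real v powr t)"
    proof (rule landau_omega.bigI[of "1/2"])
      show "eventually (\<lambda>v. norm (real (m v)) \<ge> 1/2 * norm (real v powr t)) at_top"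
        using eventually_ge_at_top[of "1::nat"]
        by eventually_elim (use m_bounds(1)[OF _ t0] in \<open>auto simp: m_def\<close>)
    qed simp
  qed
  define C1 where "C1 = (real k + 3) ^ i + (2 * real i) ^ i"
  define C2 where "C2 = 1 / ((2 * real i) ^ i * (2 * real (k - i)) ^ (k - i))"
  have C1: "0 < C1" unfolding C1_def by (simp add: add_pos_nonneg)
  have C2: "0 < C2" unfolding C2_def using i1 ik by simp
  define X where "X = max (2 * real k + 6) (2 powr (1 / a))"
  have ev: "eventually (\<lambda>v. X \<le> real v \<and> 1 \<le> v) at_top"
    using eventually_ge_at_top[of "nat \<lceil>X\<rceil> + 1"] by eventually_elim linarith
  have sT: "(\<lambda>v. real (sens v k (clique_prop k i (m v) v))) \<in> \<Theta>(\<lambda>v. real v powr (real k / 2))"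
  proof (rule bigthetaI)
    show "(\<lambda>v. real (sens v k (clique_prop k i (m v) v))) \<in> O(\<lambda>v. real v powr (real k / 2))"
    proof (rule landau_o.bigI[OF C1])
      show "eventually (\<lambda>v. norm (real (sens v k (clique_prop k i (m v) v))) \<le> C1 * norm (real v powr (real k / 2))) at_top"
        using eventually_ge_at_top[of "1::nat"]
        by eventually_elim (use sens_upper[OF i1 ik it t0] in \<open>auto simp: m_def C1_def\<close>)
    qed
    show "(\<lambda>v. real (sens v k (clique_prop k i (m v) v))) \<in> \<Omega>(\<lambda>v. real v powr (real k / 2))"
    proof (rule landau_omega.bigI[OF C2])
      show "eventually (\<lambda>v. norm (real (sens v k (clique_prop k i (m v) v))) \<ge> C2 * norm (real v powr (real k / 2))) at_top"
        using ev
      proof eventually_elim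
        case (elim v)
        hence Xv: "X \<le> real v" and v1: "1 \<le> v" by auto
        have vpos: "0 < real v" using v1 by simp
        have kv: "real k + 3 \<le> real v / 2" using Xv unfolding X_def by simp
        have "2 powr (1 / a) \<le> real v" using Xv unfolding X_def by simp
        hence "(2 powr (1 / a)) powr a \<le> real v powr a" using a0 by (intro powr_mono2) auto
        hence va: "2 \<le> real v powr a" using a0 by (simp add: powr_powr)
        have "real v powr t * real v powr a = real v powr (t + a)" by (rule powr_add[symmetric])
        also have "t + a = 1" unfolding t_def by simp
        finally have vv: "real v powr t * real v powr a = real v" using vpos by simp
        have "real v powr t * 2 \<le> real v powr t * real v powr a" using va by (intro mult_left_mono) auto
        hence pv: "real v powr t \<le> real v / 2" using vv by linarith
        have "real (m v) \<le> real v / 2"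
        proof -
          have fl0: "0 \<le> \<lfloor>real v powr t\<rfloor>" by simp
          have "real (nat \<lfloor>real v powr t\<rfloor>) = of_int \<lfloor>real v powr t\<rfloor>" using fl0 by (rule of_nat_nat)
          hence "real (nat \<lfloor>real v powr t\<rfloor>) \<le> real v powr t" by simp
          hence "real (nat \<lfloor>real v powr t\<rfloor>) \<le> real v / 2" using pv by linarith
          moreover have "real (k + 3) \<le> real v / 2" using kv by simp
          ultimately show ?thesis unfolding m_def of_nat_max by (rule max.boundedI[rotated])
        qed
        hence "real v powr (real k / 2) / ((2 * real i) ^ i * (2 * real (k - i)) ^ (k - i))
           \<le> real (sens v k (clique_prop k i (m v) v))"
          using sens_lower[OF i1 ik it t0 v1] kv unfolding m_def by simp
        thus ?case unfolding C2_def by simp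
      qed
    qed
  qed
  have hp: "\<forall>v. hypergraph_property v k (clique_prop k i (m v) v)" using cp_hp by blast
  show ?thesis using i1 ik t0 t1 it mT hp sT by blast
qed

lemma sqrt_pow: "0 \<le> (x::real) \<Longrightarrow> 1 \<le> k \<Longrightarrow> sqrt (x ^ k) = x powr (real k / 2)"
proof -
  assume x: "0 \<le> x" and k: "1 \<le> k"
  show ?thesis
  proof (cases "x = 0")
    case True thus ?thesis using k by (cases k) auto
  next
    case False
    hence "x ^ k = x powr real k" using x by (simp add: powr_realpow)
    thus ?thesis using x by (simp add: powr_half_sqrt_powr)
  qed
qed

lemma choose_theta:
  assumes k1: "1 \<le> k"
  shows "(\<lambda>v. real v powr (real k / 2)) \<in> \<Theta>(\<lambda>v. sqrt (real (v choose k)))"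
proof (rule bigthetaI)
  show "(\<lambda>v. real v powr (real k / 2)) \<in> O(\<lambda>v. sqrt (real (v choose k)))"
  proof (rule landau_o.bigI[of "real k powr (real k / 2)"])
    show "eventually (\<lambda>v. norm (real v powr (real k / 2)) \<le> real k powr (real k / 2) * norm (sqrt (real (v choose k)))) at_top"
      using eventually_ge_at_top[of k]
    proof eventually_elim
      case (elim v)
      have "(real v / real k) ^ k \<le> real (v choose k)" using elim by (rule binomial_ge_n_over_k_pow_k)
      hence "sqrt ((real v / real k) ^ k) \<le> sqrt (real (v choose k))" by simp
      hence "real v powr (real k / 2) / real k powr (real k / 2) \<le> sqrt (real (v choose k))"
        using k1 by (simp add: sqrt_pow powr_divide)
      thus ?case using k1 by (simp add: divide_simps mult.commute)
    qed
  qed (use k1 in simp)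
  show "(\<lambda>v. real v powr (real k / 2)) \<in> \<Omega>(\<lambda>v. sqrt (real (v choose k)))"
  proof (rule landau_omega.bigI[of 1])
    show "eventually (\<lambda>v. norm (real v powr (real k / 2)) \<ge> 1 * norm (sqrt (real (v choose k)))) at_top"
    proof (rule always_eventually, rule allI)
      fix v :: nat
      have "real (v choose k) \<le> real v ^ k" by (metis choose_le_pow of_nat_le_iff of_nat_power)
      hence "sqrt (real (v choose k)) \<le> sqrt (real v ^ k)" by simp
      thus "norm (real v powr (real k / 2)) \<ge> 1 * norm (sqrt (real (v choose k)))" using k1 by (simp add: sqrt_pow)
    qed
  qed simp
qed

theorem proposition3p5:
  shows "(\<forall>k::nat. k \<ge> 3 \<longrightarrow>
            (\<exists>(i::nat) (t::real) (m::nat \<Rightarrow> nat).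
               1 \<le> i \<and> i < k \<and> 0 \<le> t \<and> t \<le> 1 \<and> real i * (1 - t) = real k / 2 \<and>
               (\<lambda>v. real (m v)) \<in> \<Theta>(\<lambda>v. real v powr t) \<and>
               (\<forall>v. hypergraph_property v k (clique_prop k i (m v) v)) \<and>
               (\<lambda>v. real (sens v k (clique_prop k i (m v) v))) \<in> \<Theta>(\<lambda>v. real v powr (real k / 2))))
       \<and>
         (\<forall>k::nat. k \<ge> 2 \<longrightarrow>
            (\<exists>f :: nat \<Rightarrow> nat set set \<Rightarrow> bool.
               (\<forall>v. hypergraph_property v k (f v)) \<and>
               (\<lambda>v. real (sens v k (f v))) \<in> \<Theta>(\<lambda>v. real v powr (real k / 2)) \<and>
               (\<lambda>v. real (sens v k (f v))) \<in> \<Theta>(\<lambda>v. sqrt (real (v choose k)))))"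
proof (intro conjI allI impI)
  fix k :: nat assume "3 \<le> k"
  thus "\<exists>(i::nat) (t::real) (m::nat \<Rightarrow> nat).
               1 \<le> i \<and> i < k \<and> 0 \<le> t \<and> t \<le> 1 \<and> real i * (1 - t) = real k / 2 \<and>
               (\<lambda>v. real (m v)) \<in> \<Theta>(\<lambda>v. real v powr t) \<and>
               (\<forall>v. hypergraph_property v k (clique_prop k i (m v) v)) \<and>
               (\<lambda>v. real (sens v k (clique_prop k i (m v) v))) \<in> \<Theta>(\<lambda>v. real v powr (real k / 2))"
    using main_k by simp
next
  fix k :: nat assume k2: "2 \<le> k"
  obtain i t m where H: "(\<forall>v. hypergraph_property v k (clique_prop k i (m v) v))"
    "(\<lambda>v. real (sens v k (clique_prop k i (m v) v))) \<in> \<Theta>(\<lambda>v. real v powr (real k / 2))"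
    using main_k[OF k2] by blast
  have "(\<lambda>v. real (sens v k (clique_prop k i (m v) v))) \<in> \<Theta>(\<lambda>v. sqrt (real (v choose k)))"
    using landau_theta.bigtheta_trans1[OF H(2) choose_theta] k2 by simp
  thus "\<exists>f :: nat \<Rightarrow> nat set set \<Rightarrow> bool.
               (\<forall>v. hypergraph_property v k (f v)) \<and>
               (\<lambda>v. real (sens v k (f v))) \<in> \<Theta>(\<lambda>v. real v powr (real k / 2)) \<and>
               (\<lambda>v. real (sens v k (f v))) \<in> \<Theta>(\<lambda>v. sqrt (real (v choose k)))"
    using H by (intro exI[of _ "\<lambda>v. clique_prop k i (m v) v"]) simp
qed

end
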